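(* Let $\mathcal D=\{\mathbf D_i:i\in I\}$ be a class of upwards-closed dependency notions, and for each $i\in I$ let $\gamma_i:\mathbb N\to\mathbb N$ be such that $\mathbf D_i$ is $\gamma_i$-bounded. Let $\phi\in\mathbf{FO}(=\!(\cdot),\mathcal D,\sqcup)$ be a formula in which each $\mathbf D_i$ occurs $k_i$ times, and let $\nu_\phi(n)=\sum_{i\in I}k_i\gamma_i(n)$. Then for all finite structures $\mathfrak M$ and all teams $X$: if $\mathfrak M\models_X\phi$, then there exists $Y\subseteq X$ with $|Y|\le\nu_\phi(|M|)$ and $\mathfrak M\models_Y\phi$.
   Context: Team semantics (lax version). For a structure $\mathfrak M$ with domain $M$, a team $X$ is a (possibly empty) set of assignments $s:V\to M$, $V$ a finite set of variables; $X(\vec v)=\{s(\vec v):s\in X\}$. Satisfaction for formulas in negation normal form: first-order literal $\alpha$: every $s\in X$ satisfies $\alpha$ (Tarski); $\psi\vee\theta$: $X=Y\cup Z$ with $\mathfrak M\models_Y\psi$, $\mathfrak M\models_Z\theta$; $\psi\wedge\theta$: both; $\exists v\psi$: some $F:X\to\mathcal P(M)\setminus\{\emptyset\}$ with $\mathfrak M\models_{X[F/v]}\psi$, $X[F/v]=\{s[m/v]:s\in X,m\in F(s)\}$; $\forall v\psi$: $\mathfrak M\models_{X[M/v]}\psi$, $X[M/v]=\{s[m/v]:s\in X,m\in M\}$. A $k$-ary dependency notion $\mathbf D$ is an isomorphism-closed class of structures $(M,R)$, $R$ a $k$-ary relation; $\mathfrak M\models_X\mathbf D\vec v$ iff $(M,X(\vec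 v))\in\mathbf D$. $\mathbf D$ is upwards-closed if $(M,R)\in\mathbf D$, $R\subseteq S$ imply $(M,S)\in\mathbf D$. For $\gamma:\mathbb N\to\mathbb N$, $\mathbf D$ is $\gamma$-bounded if for all finite structures $\mathfrak M$, teams $X$ and tuples $\vec v$, whenever $\mathfrak M\models_X\mathbf D\vec v$ there is $Y\subseteq X$ with $|Y|\le\gamma(|M|)$ and $\mathfrak M\models_Y\mathbf D\vec v$. Constancy atoms (all arities): $\mathfrak M\models_X=\!(\vec v)$ iff $s(\vec v)=s'(\vec v)$ for all $s,s'\in X$. Classical disjunction: $\mathfrak M\models_X\phi\sqcup\psi$ iff $\mathfrak M\models_X\phi$ or $\mathfrak M\models_X\psi$. $\mathbf{FO}(=\!(\cdot),\mathcal D,\sqcup)$ is first-order logic in negation normal form extended with constancy atoms, the atoms of $\mathcal D$, and $\sqcup$. *)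

theory Defs
  imports Main
begin

datatype 'v tm = Var 'v | Fn nat "'v tm list"

text \<open>Structures: a domain together with interpretations of function and relation
symbols (symbols are identified by natural numbers; arities are implicit).\<close>

record 'a struc =
  univ :: "'a set"
  fnI  :: "nat \<Rightarrow> 'a list \<Rightarrow> 'a"
  relI :: "nat \<Rightarrow> 'a list \<Rightarrow> bool"

definition struc_wf :: "'a struc \<Rightarrow> bool" where
  "struc_wf A \<longleftrightarrow> univ A \<noteq> {} \<and>
     (\<forall>f xs. set xs \<subseteq> univ A \<longrightarrow> fnI A f xs \<in> univ A)"

definition finite_struc :: "'a struc \<Rightarrow> bool" where
  "finite_struc A \<longleftrightarrow> struc_wf A \<and> finite (univ A)"

type_synonym ('v,'a) assign = "'v \<rightharpoonup> 'a"

definition is_team :: "'a set \<Rightarrow> 'v set \<Rightarrow> ('v,'a) assign set \<Rightarrow> bool" where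
  "is_team M V X \<longleftrightarrow> finite V \<and> (\<forall>s\<in>X. dom s = V \<and> ran s \<subseteq> M)"

fun evl :: "'a struc \<Rightarrow> ('v,'a) assign \<Rightarrow> 'v tm \<Rightarrow> 'a" where
  "evl A s (Var v) = the (s v)"
| "evl A s (Fn f ts) = fnI A f (map (evl A s) ts)"

definition tup :: "('v,'a) assign \<Rightarrow> 'v list \<Rightarrow> 'a list" where
  "tup s vs = map (\<lambda>v. the (s v)) vs"

definition team_rel :: "('v,'a) assign set \<Rightarrow> 'v list \<Rightarrow> 'a list set" where
  "team_rel X vs = (\<lambda>s. tup s vs) ` X"

text \<open>A \<open>k\<close>-ary dependency notion: an isomorphism-closed class of structures \<open>(M,R)\<close>
with \<open>R\<close> a \<open>k\<close>-ary relation on \<open>M\<close>, represented as a predicate on pairs \<open>(M,R)\<close>.\<close>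

definition dep_notion :: "nat \<Rightarrow> ('a set \<Rightarrow> 'a list set \<Rightarrow> bool) \<Rightarrow> bool" where
  "dep_notion k D \<longleftrightarrow>
     (\<forall>M R. D M R \<longrightarrow> (\<forall>t\<in>R. length t = k \<and> set t \<subseteq> M)) \<and>
     (\<forall>M M' R f. D M R \<and> bij_betw f M M' \<longrightarrow> D M' (map f ` R))"

definition upwards_closed :: "nat \<Rightarrow> ('a set \<Rightarrow> 'a list set \<Rightarrow> bool) \<Rightarrow> bool" where
  "upwards_closed k D \<longleftrightarrow>
     (\<forall>M R S. D M R \<and> R \<subseteq> S \<and> (\<forall>t\<in>S. length t = k \<and> set t \<subseteq> M) \<longrightarrow> D M S)"

definition gamma_bounded ::
  "nat \<Rightarrow> ('a set \<Rightarrow> 'a list set \<Rightarrow> bool) \<Rightarrow> (nat \<Rightarrow> nat) \<Rightarrow> bool" where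
  "gamma_bounded k D \<gamma> \<longleftrightarrow>
     (\<forall>(M::'a set) (V::'v set) (X::('v,'a) assign set) vs.
        finite M \<and> M \<noteq> {} \<and> is_team M V X \<and> set vs \<subseteq> V \<and> length vs = k \<and>
        D M (team_rel X vs) \<longrightarrow>
        (\<exists>Y\<subseteq>X. card Y \<le> \<gamma> (card M) \<and> D M (team_rel Y vs)))"

datatype ('v,'i) fm =
    Rel bool nat "'v tm list"    \<comment> \<open>\<open>Rel True R ts\<close> = R(ts), \<open>Rel False R ts\<close> = \<not>R(ts)\<close>
  | Eq bool "'v tm" "'v tm"      \<comment> \<open>\<open>t = u\<close> resp. \<open>\<not> t = u\<close>\<close>
  | Const "'v list"              \<comment> \<open>constancy atom =(vs)\<close>
  | Dep 'i "'v list"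
  | Or "('v,'i) fm" "('v,'i) fm"
  | And "('v,'i) fm" "('v,'i) fm"
  | CDisj "('v,'i) fm" "('v,'i) fm"  \<comment> \<open>classical disjunction\<close>
  | Ex 'v "('v,'i) fm"
  | All 'v "('v,'i) fm"

fun fv_tm :: "'v tm \<Rightarrow> 'v set" where
  "fv_tm (Var v) = {v}"
| "fv_tm (Fn f ts) = (\<Union>t\<in>set ts. fv_tm t)"

primrec fv :: "('v,'i) fm \<Rightarrow> 'v set" where
  "fv (Rel b r ts) = (\<Union>t\<in>set ts. fv_tm t)"
| "fv (Eq b t u) = fv_tm t \<union> fv_tm u"
| "fv (Const vs) = set vs"
| "fv (Dep i vs) = set vs"
| "fv (Or p q) = fv p \<union> fv q"
| "fv (And p q) = fv p \<union> fv q"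
| "fv (CDisj p q) = fv p \<union> fv q"
| "fv (Ex v p) = fv p - {v}"
| "fv (All v p) = fv p - {v}"

primrec wf_fm :: "('i \<Rightarrow> nat) \<Rightarrow> ('v,'i) fm \<Rightarrow> bool" where
  "wf_fm ar (Rel b r ts) = True"
| "wf_fm ar (Eq b t u) = True"
| "wf_fm ar (Const vs) = True"
| "wf_fm ar (Dep i vs) = (length vs = ar i)"
| "wf_fm ar (Or p q) = (wf_fm ar p \<and> wf_fm ar q)"
| "wf_fm ar (And p q) = (wf_fm ar p \<and> wf_fm ar q)"
| "wf_fm ar (CDisj p q) = (wf_fm ar p \<and> wf_fm ar q)"
| "wf_fm ar (Ex v p) = wf_fm ar p"
| "wf_fm ar (All v p) = wf_fm ar p"

primrec occ :: "'i \<Rightarrow> ('v,'i) fm \<Rightarrow> nat" where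
  "occ i (Rel b r ts) = 0"
| "occ i (Eq b t u) = 0"
| "occ i (Const vs) = 0"
| "occ i (Dep j vs) = (if j = i then 1 else 0)"
| "occ i (Or p q) = occ i p + occ i q"
| "occ i (And p q) = occ i p + occ i q"
| "occ i (CDisj p q) = occ i p + occ i q"
| "occ i (Ex v p) = occ i p"
| "occ i (All v p) = occ i p"

text \<open>\<open>\<nu>_\<phi>(n) = \<Sum>_{i\<in>I} k_i \<gamma>_i(n)\<close> (only finitely many \<open>k_i\<close> are nonzero).\<close>
definition nu :: "('i \<Rightarrow> nat \<Rightarrow> nat) \<Rightarrow> ('v,'i) fm \<Rightarrow> nat \<Rightarrow> nat" where
  "nu \<gamma> \<phi> n = (\<Sum>i\<in>{i. occ i \<phi> \<noteq> 0}. occ i \<phi> * \<gamma> i n)"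

section \<open>Lax team semantics\<close>

primrec sat :: "('i \<Rightarrow> 'a set \<Rightarrow> 'a list set \<Rightarrow> bool) \<Rightarrow> 'a struc \<Rightarrow> ('v,'i) fm
                 \<Rightarrow> ('v,'a) assign set \<Rightarrow> bool" where
  "sat D A (Rel b r ts) X = (\<forall>s\<in>X. relI A r (map (evl A s) ts) = b)"
| "sat D A (Eq b t u) X = (\<forall>s\<in>X. (evl A s t = evl A s u) = b)"
| "sat D A (Const vs) X = (\<forall>s\<in>X. \<forall>s'\<in>X. tup s vs = tup s' vs)"
| "sat D A (Dep i vs) X = D i (univ A) (team_rel X vs)"
| "sat D A (Or p q) X = (\<exists>Y Z. X = Y \<union> Z \<and> sat D A p Y \<and> sat D A q Z)"
| "sat D A (And p q) X = (sat D A p X \<and> sat D A q X)"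
| "sat D A (CDisj p q) X = (sat D A p X \<or> sat D A q X)"
| "sat D A (Ex v p) X = (\<exists>F. (\<forall>s\<in>X. F s \<subseteq> univ A \<and> F s \<noteq> {}) \<and>
       sat D A p {s(v \<mapsto> m) | s m. s \<in> X \<and> m \<in> F s})"
| "sat D A (All v p) X = sat D A p {s(v \<mapsto> m) | s m. s \<in> X \<and> m \<in> univ A}"

end

theory Submission
  imports Defs
begin

lemma team_finite: "is_team M V X \<Longrightarrow> finite M \<Longrightarrow> finite X"
  unfolding is_team_def
  by (rule finite_subset[OF _ finite_set_of_finite_maps[of V M]]) auto

lemma ran_upd_sub: "ran (s(v\<mapsto>m)) \<subseteq> insert m (ran s)"
  by (auto simp: ran_def)

lemma occ_finite: "finite {i. occ i \<phi> \<noteq> 0}"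
proof (induction \<phi>)
  case (Dep j vs)
  then show ?case by (rule finite_subset[of _ "{j}"]) auto
qed (simp_all add: Collect_disj_eq)

lemma nu_sum: "finite S \<Longrightarrow> {i. occ i \<phi> \<noteq> 0} \<subseteq> S \<Longrightarrow> nu \<gamma> \<phi> n = (\<Sum>i\<in>S. occ i \<phi> * \<gamma> i n)"
  unfolding nu_def by (rule sum.mono_neutral_left) auto

lemma nu_bin:
  assumes "\<And>i. occ i r = occ i p + occ i q"
  shows "nu \<gamma> r n = nu \<gamma> p n + nu \<gamma> q n"
proof -
  let ?S = "{i. occ i p \<noteq> 0} \<union> {i. occ i q \<noteq> 0}"
  have f: "finite ?S" using occ_finite[of p] occ_finite[of q] by (rule finite_UnI)
  have "nu \<gamma> r n = (\<Sum>i\<in>?S. occ i r * \<gamma> i n)" by (rule nu_sum[OF f]) (auto simp: assms)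
  also have "\<dots> = (\<Sum>i\<in>?S. occ i p * \<gamma> i n) + (\<Sum>i\<in>?S. occ i q * \<gamma> i n)"
    by (simp add: assms distrib_right sum.distrib)
  also have "\<dots> = nu \<gamma> p n + nu \<gamma> q n"
    using nu_sum[OF f, of p] nu_sum[OF f, of q] by auto
  finally show ?thesis .
qed

lemma key:
  fixes D :: "'i \<Rightarrow> 'a set \<Rightarrow> 'a list set \<Rightarrow> bool"
    and \<phi> :: "('v,'i) fm"
  assumes up: "\<And>i. upwards_closed (ar i) (D i)"
    and gb: "\<And>i. gamma_bounded TYPE('v) (ar i) (D i) (\<gamma> i)"
    and fs: "finite_struc A"
  shows "wf_fm ar \<phi> \<Longrightarrow> is_team (univ A) V X \<Longrightarrow> fv \<phi> \<subseteq> V \<Longrightarrow> sat D A \<phi> X \<Longrightarrow>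
    \<exists>Y\<subseteq>X. card Y \<le> nu \<gamma> \<phi> (card (univ A)) \<and> (\<forall>Z. Y \<subseteq> Z \<and> Z \<subseteq> X \<longrightarrow> sat D A \<phi> Z)"
proof (induction \<phi> arbitrary: V X)
  case (Rel b r ts)
  then show ?case by (intro exI[of _ "{}"]) auto
next
  case (Eq b t u)
  then show ?case by (intro exI[of _ "{}"]) auto
next
  case (Const vs)
  then show ?case by (intro exI[of _ "{}"]) (simp, blast)
next
  case (Dep i vs)
  have fM: "finite (univ A)" "univ A \<noteq> {}" using fs by (auto simp: finite_struc_def struc_wf_def)
  have "\<exists>Y\<subseteq>X. card Y \<le> \<gamma> i (card (univ A)) \<and> D i (univ A) (team_rel Y vs)"
  proof -
    have pre: "finite (univ A) \<and> univ A \<noteq> {} \<and> is_team (univ A) V X \<and> set vs \<subseteq> V \<and>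
       length vs = ar i \<and> D i (univ A) (team_rel X vs)" using Dep.prems fM by simp
    have g: "\<forall>(M::'a set) (V::'v set) (X::('v,'a) assign set) vs.
        finite M \<and> M \<noteq> {} \<and> is_team M V X \<and> set vs \<subseteq> V \<and> length vs = ar i \<and>
        D i M (team_rel X vs) \<longrightarrow>
        (\<exists>Y\<subseteq>X. card Y \<le> \<gamma> i (card M) \<and> D i M (team_rel Y vs))"
      using gb[of i] unfolding gamma_bounded_def by assumption
    show ?thesis using spec[OF spec[OF spec[OF spec[OF g, of "univ A"], of V], of X], of vs] pre
      by (rule mp)
  qed
  then obtain Y where Y: "Y \<subseteq> X" "card Y \<le> \<gamma> i (card (univ A))"
     "D i (univ A) (team_rel Y vs)" by blast
  have nu: "nu \<gamma> (Dep i vs) n = \<gamma> i n" for n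
  proof -
    have "{j. occ j (Dep i vs) \<noteq> 0} = {i}" by auto
    then show ?thesis unfolding nu_def by simp
  qed
  show ?case
  proof (intro exI[of _ Y] conjI allI impI)
    fix Z assume Z: "Y \<subseteq> Z \<and> Z \<subseteq> X"
    have "\<forall>t\<in>team_rel Z vs. length t = ar i \<and> set t \<subseteq> univ A"
    proof
      fix t assume "t \<in> team_rel Z vs"
      then obtain s where s: "s \<in> X" "t = tup s vs" using Z unfolding team_rel_def by auto
      have "dom s = V" "ran s \<subseteq> univ A" using Dep.prems(2) s(1) unfolding is_team_def by auto
      moreover have "set vs \<subseteq> V" using Dep.prems(3) by simp
      ultimately have "set t \<subseteq> univ A"
      proof -
        assume a: "dom s = V" "ran s \<subseteq> univ A" "set vs \<subseteq> V"
        have "the (s w) \<in> univ A" if "w \<in> set vs" for w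
        proof -
          from that a obtain x where "s w = Some x" by blast
          then show ?thesis using a(2) by (auto intro: ranI)
        qed
        then show ?thesis using s(2) unfolding tup_def by auto
      qed
      then show "length t = ar i \<and> set t \<subseteq> univ A" using s(2) Dep.prems(1)
        by (simp add: tup_def)
    qed
    moreover have "team_rel Y vs \<subseteq> team_rel Z vs" using Z unfolding team_rel_def by auto
    moreover have uc: "\<And>R S. D i (univ A) R \<Longrightarrow> R \<subseteq> S \<Longrightarrow>
        (\<forall>t\<in>S. length t = ar i \<and> set t \<subseteq> univ A) \<Longrightarrow> D i (univ A) S"
      using up[of i] unfolding upwards_closed_def by blast
    ultimately show "sat D A (Dep i vs) Z" using uc[OF Y(3)] by simp
  qed (use Y nu in auto)
next
  case (Or p q)
  from Or.prems obtain X1 X2 where X: "X = X1 \<union> X2" "sat D A p X1" "sat D A q X2" by auto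
  have t1: "is_team (univ A) V X1" and t2: "is_team (univ A) V X2"
    using Or.prems(2) X(1) unfolding is_team_def by auto
  obtain Y1 where Y1: "Y1 \<subseteq> X1" "card Y1 \<le> nu \<gamma> p (card (univ A))"
      "\<forall>Z. Y1 \<subseteq> Z \<and> Z \<subseteq> X1 \<longrightarrow> sat D A p Z"
    using Or.IH(1)[OF _ t1 _ X(2)] Or.prems by auto
  obtain Y2 where Y2: "Y2 \<subseteq> X2" "card Y2 \<le> nu \<gamma> q (card (univ A))"
      "\<forall>Z. Y2 \<subseteq> Z \<and> Z \<subseteq> X2 \<longrightarrow> sat D A q Z"
    using Or.IH(2)[OF _ t2 _ X(3)] Or.prems by auto
  have nu: "nu \<gamma> (Or p q) n = nu \<gamma> p n + nu \<gamma> q n" for n by (rule nu_bin) simp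
  show ?case
  proof (intro exI[of _ "Y1 \<union> Y2"] conjI allI impI)
    show "card (Y1 \<union> Y2) \<le> nu \<gamma> (Or p q) (card (univ A))"
      using card_Un_le[of Y1 Y2] Y1(2) Y2(2) nu by simp
    fix Z assume Z: "Y1 \<union> Y2 \<subseteq> Z \<and> Z \<subseteq> X"
    have "sat D A p (Z \<inter> X1)" using Y1 Z by auto
    moreover have "sat D A q (Z \<inter> X2)" using Y2 Z by auto
    moreover have "Z = (Z \<inter> X1) \<union> (Z \<inter> X2)" using Z X(1) by auto
    ultimately show "sat D A (Or p q) Z" by auto
  qed (use X Y1 Y2 in auto)
next
  case (And p q)
  obtain Y1 where Y1: "Y1 \<subseteq> X" "card Y1 \<le> nu \<gamma> p (card (univ A))"
      "\<forall>Z. Y1 \<subseteq> Z \<and> Z \<subseteq> X \<longrightarrow> sat D A p Z"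
    using And.IH(1)[OF _ And.prems(2)] And.prems by auto
  obtain Y2 where Y2: "Y2 \<subseteq> X" "card Y2 \<le> nu \<gamma> q (card (univ A))"
      "\<forall>Z. Y2 \<subseteq> Z \<and> Z \<subseteq> X \<longrightarrow> sat D A q Z"
    using And.IH(2)[OF _ And.prems(2)] And.prems by auto
  have nu: "nu \<gamma> (And p q) n = nu \<gamma> p n + nu \<gamma> q n" for n by (rule nu_bin) simp
  show ?case
  proof (intro exI[of _ "Y1 \<union> Y2"] conjI allI impI)
    show "card (Y1 \<union> Y2) \<le> nu \<gamma> (And p q) (card (univ A))"
      using card_Un_le[of Y1 Y2] Y1(2) Y2(2) nu by simp
  qed (use Y1 Y2 in auto)
next
  case (CDisj p q)
  have nu: "nu \<gamma> (CDisj p q) n = nu \<gamma> p n + nu \<gamma> q n" for n by (rule nu_bin) simp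
  show ?case
  proof (cases "sat D A p X")
    case True
    then obtain Y1 where Y1: "Y1 \<subseteq> X" "card Y1 \<le> nu \<gamma> p (card (univ A))"
      "\<forall>Z. Y1 \<subseteq> Z \<and> Z \<subseteq> X \<longrightarrow> sat D A p Z"
      using CDisj.IH(1)[OF _ CDisj.prems(2)] CDisj.prems by auto
    show ?thesis by (rule exI[of _ Y1]) (use Y1 nu in auto)
  next
    case False
    then have "sat D A q X" using CDisj.prems by auto
    then obtain Y1 where Y1: "Y1 \<subseteq> X" "card Y1 \<le> nu \<gamma> q (card (univ A))"
      "\<forall>Z. Y1 \<subseteq> Z \<and> Z \<subseteq> X \<longrightarrow> sat D A q Z"
      using CDisj.IH(2)[OF _ CDisj.prems(2)] CDisj.prems by auto
    show ?thesis by (rule exI[of _ Y1]) (use Y1 nu in auto)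
  qed
next
  case (Ex v p)
  from Ex.prems(4) obtain F where F: "\<forall>s\<in>X. F s \<subseteq> univ A \<and> F s \<noteq> {}"
    "sat D A p {s(v \<mapsto> m) | s m. s \<in> X \<and> m \<in> F s}" by auto
  let ?X' = "{s(v \<mapsto> m) | s m. s \<in> X \<and> m \<in> F s}"
  have fM: "finite (univ A)" using fs by (auto simp: finite_struc_def)
  have tX: "is_team (univ A) (insert v V) ?X'"
    unfolding is_team_def
  proof (rule conjI[OF _ ballI])
    show "finite (insert v V)" using Ex.prems(2) by (simp add: is_team_def)
    fix t assume "t \<in> ?X'"
    then obtain s m where sm: "t = s(v \<mapsto> m)" "s \<in> X" "m \<in> F s" by blast
    have "dom s = V" "ran s \<subseteq> univ A" using Ex.prems(2) sm(2) by (auto simp: is_team_def)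
    moreover have "m \<in> univ A" using F(1) sm by blast
    ultimately show "dom t = insert v V \<and> ran t \<subseteq> univ A"
      using sm(1) ran_upd_sub[of s v m] by auto
  qed
  obtain Y' where Y': "Y' \<subseteq> ?X'" "card Y' \<le> nu \<gamma> p (card (univ A))"
      "\<forall>Z. Y' \<subseteq> Z \<and> Z \<subseteq> ?X' \<longrightarrow> sat D A p Z"
    using Ex.IH[OF _ tX _ F(2)] Ex.prems by auto
  have fY': "finite Y'" using team_finite[OF tX fM] Y'(1) finite_subset by blast
  have "\<forall>t\<in>Y'. \<exists>s. s \<in> X \<and> (\<exists>m\<in>F s. t = s(v \<mapsto> m))" using Y'(1) by blast
  from bchoice[OF this] obtain g where
    g0: "\<forall>t\<in>Y'. g t \<in> X \<and> (\<exists>m\<in>F (g t). t = (g t)(v \<mapsto> m))" by blast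
  have g: "g t \<in> X \<and> (\<exists>m\<in>F (g t). t = (g t)(v \<mapsto> m))" if "t \<in> Y'" for t
    using g0 that by blast
  show ?case
  proof (intro exI[of _ "g ` Y'"] conjI allI impI)
    show "g ` Y' \<subseteq> X" using g by auto
    show "card (g ` Y') \<le> nu \<gamma> (Ex v p) (card (univ A))"
      using card_image_le[OF fY', of g] Y'(2) by (simp add: nu_def)
    fix Z assume Z: "g ` Y' \<subseteq> Z \<and> Z \<subseteq> X"
    let ?Z' = "{s(v \<mapsto> m) | s m. s \<in> Z \<and> m \<in> F s}"
    have "Y' \<subseteq> ?Z'"
    proof
      fix t assume t: "t \<in> Y'"
      then obtain m where "m \<in> F (g t)" "t = (g t)(v \<mapsto> m)" using g by blast
      moreover have "g t \<in> Z" using Z t by auto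
      ultimately show "t \<in> ?Z'" by blast
    qed
    moreover have "?Z' \<subseteq> ?X'" using Z by blast
    ultimately have "sat D A p ?Z'" using Y'(3) by blast
    then show "sat D A (Ex v p) Z" unfolding sat.simps using F(1) Z
      by (intro exI[of _ F] conjI) blast+
  qed
next
  case (All v p)
  let ?X' = "{s(v \<mapsto> m) | s m. s \<in> X \<and> m \<in> univ A}"
  have F: "sat D A p ?X'" using All.prems by simp
  have fM: "finite (univ A)" using fs by (auto simp: finite_struc_def)
  have tX: "is_team (univ A) (insert v V) ?X'"
    unfolding is_team_def
  proof (rule conjI[OF _ ballI])
    show "finite (insert v V)" using All.prems(2) by (simp add: is_team_def)
    fix t assume "t \<in> ?X'"
    then obtain s m where sm: "t = s(v \<mapsto> m)" "s \<in> X" "m \<in> univ A" by blast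
    have "dom s = V" "ran s \<subseteq> univ A" using All.prems(2) sm(2) by (auto simp: is_team_def)
    then show "dom t = insert v V \<and> ran t \<subseteq> univ A"
      using sm ran_upd_sub[of s v m] by auto
  qed
  obtain Y' where Y': "Y' \<subseteq> ?X'" "card Y' \<le> nu \<gamma> p (card (univ A))"
      "\<forall>Z. Y' \<subseteq> Z \<and> Z \<subseteq> ?X' \<longrightarrow> sat D A p Z"
    using All.IH[OF _ tX _ F] All.prems by auto
  have fY': "finite Y'" using team_finite[OF tX fM] Y'(1) finite_subset by blast
  have "\<forall>t\<in>Y'. \<exists>s. s \<in> X \<and> (\<exists>m\<in>univ A. t = s(v \<mapsto> m))" using Y'(1) by blast
  from bchoice[OF this] obtain g where
    g0: "\<forall>t\<in>Y'. g t \<in> X \<and> (\<exists>m\<in>univ A. t = (g t)(v \<mapsto> m))" by blast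
  have g: "g t \<in> X \<and> (\<exists>m\<in>univ A. t = (g t)(v \<mapsto> m))" if "t \<in> Y'" for t
    using g0 that by blast
  show ?case
  proof (intro exI[of _ "g ` Y'"] conjI allI impI)
    show "g ` Y' \<subseteq> X" using g by auto
    show "card (g ` Y') \<le> nu \<gamma> (All v p) (card (univ A))"
      using card_image_le[OF fY', of g] Y'(2) by (simp add: nu_def)
    fix Z assume Z: "g ` Y' \<subseteq> Z \<and> Z \<subseteq> X"
    let ?Z' = "{s(v \<mapsto> m) | s m. s \<in> Z \<and> m \<in> univ A}"
    have "Y' \<subseteq> ?Z'"
    proof
      fix t assume t: "t \<in> Y'"
      then obtain m where "m \<in> univ A" "t = (g t)(v \<mapsto> m)" using g by blast
      moreover have "g t \<in> Z" using Z t by auto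
      ultimately show "t \<in> ?Z'" by blast
    qed
    moreover have "?Z' \<subseteq> ?X'" using Z by blast
    ultimately have "sat D A p ?Z'" using Y'(3) by blast
    then show "sat D A (All v p) Z" by simp
  qed
qed

theorem mainTheorem8:
  fixes D :: "'i \<Rightarrow> 'a set \<Rightarrow> 'a list set \<Rightarrow> bool"
    and ar :: "'i \<Rightarrow> nat"
    and \<gamma> :: "'i \<Rightarrow> nat \<Rightarrow> nat"
    and \<phi> :: "('v,'i) fm"
    and A :: "'a struc"
    and V :: "'v set"
    and X :: "('v,'a) assign set"
  assumes "\<And>i. dep_notion (ar i) (D i)"
    and "\<And>i. upwards_closed (ar i) (D i)"
    and "\<And>i. gamma_bounded TYPE('v) (ar i) (D i) (\<gamma> i)"
    and "wf_fm ar \<phi>"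
    and "finite_struc A"
    and "is_team (univ A) V X"
    and "fv \<phi> \<subseteq> V"
    and "sat D A \<phi> X"
  shows "\<exists>Y\<subseteq>X. card Y \<le> nu \<gamma> \<phi> (card (univ A)) \<and> sat D A \<phi> Y"
proof -
  obtain Y where "Y \<subseteq> X" "card Y \<le> nu \<gamma> \<phi> (card (univ A))"
    "\<forall>Z. Y \<subseteq> Z \<and> Z \<subseteq> X \<longrightarrow> sat D A \<phi> Z"
    using key[OF assms(2,3,5,4,6,7,8)] by blast
  then show ?thesis by blast
qed

end
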